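(* Let $(\Sigma,\mu)$ be a $\sigma$-finite measure space, $1\le\ell<q<r\le\infty$ and $T>0$. Let $g\in L^1(0,T;L^\ell_\mu\cap L^q_\mu)$ and $u\in L^\infty(0,T;L^\ell_\mu\cap L^r_\mu)$, write $u_0=u(0)$, and suppose that for some $\omega\ge0$, all $0\le s\le t\le T$ and $\lambda\ge0$, $$\|G_\lambda(e^{-\omega t}u(t))\|_\ell\le\|G_\lambda(e^{-\omega s}u(s))\|_\ell+\int_s^te^{-\omega\tau}\|g(\tau)\mathbb{1}_{\{e^{-\omega\tau}|u(\tau)|>\lambda\}}\|_\ell d\tau.$$ Suppose there are increasing functions $c_1,c_2$ on $[0,T]$ with $c_1>0$, $c_2\ge0$, and exponents $\alpha\ge0$, $0<\gamma^*\le\gamma<\infty$ such that for every $t\in(0,T]$ $$\|u(t)\|_r\le\max\Big\{c_1(\tfrac t2)\big(\tfrac2t+\omega\big)^\alpha\big(\|u(\tfrac t2)\|_q+\|g\|_{L^1(\frac t2,t;L^q_\mu)}\big)^\gamma,\ c_2(\tfrac t2)\big(\|u(\tfrac t2)\|_q+\|g\|_{L^1(\frac t2,t;L^q_\mu)}\big)^{\gamma^*}\Big\}.$$ Let $\theta:=1-\gamma\frac{\frac1\ell-\frac1q}{\frac1\ell-\frac1r}$ and suppose $\theta>0$. Then for all $t\in(0,T]$ $$\|u(t)\|_r\le2^\gamma\Big(2^{\frac{\alpha}{\gamma\theta}}+\sup_{s\in(0,t]}N(s)^\theta\Big)^{\frac\gamma\theta}\max\Big\{c_1(t)^{\frac1\theta}\big(\tfrac1t+\omega\big)^{\frac\alpha\theta},c_2(t)^{\frac1\theta}\Big\}\Big(e^{\omega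 t}\|u_0\|_\ell+\int_0^te^{\omega(t-\tau)}\|g(\tau)\|_\ell d\tau\Big)^{\frac{\theta_\ell\gamma}\theta},$$ where $\theta_\ell=\frac{\frac1q-\frac1r}{\frac1\ell-\frac1r}$, $$N(t)=\sup_{s\in(0,t]}\frac{M(\frac s2)\|g\|_{L^1(\frac s2,s;L^q_\mu)}+c_2(\frac s2)^{\frac1\gamma}}{M(s)^{\frac1\theta}\big(e^{\omega s}\|u_0\|_\ell+\int_0^se^{\omega(s-\tau)}\|g(\tau)\|_\ell d\tau\big)^{\frac{\theta_\ell}\theta}},\qquad M(t)=\max\Big\{c_1(t)^{\frac1\gamma}\big(\tfrac1t+\omega\big)^{\frac\alpha\gamma},c_2(t)^{\frac1\gamma}\Big\}.$$
   Context: $L^q_\mu=L^q(\Sigma,\mu)$ with norm $\|\cdot\|_q$; $G_\lambda(s)=[|s|-\lambda]^+\mathrm{sign}(s)$; $1/r=0$ if $r=\infty$. *)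

theory Defs
  imports "HOL-Analysis.Analysis" "HOL-Probability.Essential_Supremum"
begin

definition exp_inv :: "ereal \<Rightarrow> real" where
  "exp_inv p = (if p = \<infinity> then 0 else 1 / real_of_ereal p)"

text \<open>L^p norm (real valued; meaningful for functions in L^p).\<close>
definition Lnorm :: "'a measure \<Rightarrow> ereal \<Rightarrow> ('a \<Rightarrow> real) \<Rightarrow> real" where
  "Lnorm M p f =
     (if p = \<infinity> then real_of_ereal (esssup M (\<lambda>x. ereal \<bar>f x\<bar>))
      else enn2real (\<integral>\<^sup>+ x. ennreal (\<bar>f x\<bar> powr real_of_ereal p) \<partial>M) powr (1 / real_of_ereal p))"

definition memLp :: "'a measure \<Rightarrow> ereal \<Rightarrow> ('a \<Rightarrow> real) \<Rightarrow> bool" where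
  "memLp M p f \<longleftrightarrow> f \<in> borel_measurable M \<and>
     (if p = \<infinity> then esssup M (\<lambda>x. ereal \<bar>f x\<bar>) < \<infinity>
      else (\<integral>\<^sup>+ x. ennreal (\<bar>f x\<bar> powr real_of_ereal p) \<partial>M) < \<infinity>)"

definition G :: "real \<Rightarrow> real \<Rightarrow> real" where
  "G lam s = max (\<bar>s\<bar> - lam) 0 * sgn s"

definition epowr :: "ennreal \<Rightarrow> real \<Rightarrow> ennreal" where
  "epowr x p = (if x = \<infinity> then \<infinity> else ennreal (enn2real x powr p))"

end

theory Submission imports Defs begin


lemma Lnorm_nonneg: "Lnorm M p f \<ge> 0"
proof (cases "p = \<infinity>")
  case True
  define e where "e = esssup M (\<lambda>x. ereal \<bar>f x\<bar>)"
  have "real_of_ereal e \<ge> 0"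
  proof (cases "e < 0")
    case False then show ?thesis by (simp add: real_of_ereal_pos)
  next
    case True
    have "AE x in M. ereal \<bar>f x\<bar> \<le> e" unfolding e_def by (rule esssup_AE)
    then have F: "AE x in M. False"
    proof eventually_elim
      fix x assume "ereal \<bar>f x\<bar> \<le> e"
      moreover have "0 \<le> ereal \<bar>f x\<bar>" by simp
      ultimately have "0 \<le> e" by (rule order_trans[rotated])
      with True show False by simp
    qed
    show ?thesis
    proof (cases "(\<lambda>x. ereal \<bar>f x\<bar>) \<in> borel_measurable M")
      case True
      have "e \<le> -\<infinity>" unfolding e_def by (rule esssup_I[OF True]) (use F in \<open>auto elim: eventually_mono\<close>)
      then show ?thesis by simp
    next
      case False then have "e = \<infinity>" unfolding e_def by (simp add: esssup_non_measurable top_ereal_def)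
      then show ?thesis by simp
    qed
  qed
  then show ?thesis using True by (simp add: Lnorm_def e_def)
qed (simp add: Lnorm_def)

lemma G0: "G 0 y = y"
  by (simp add: G_def abs_mult_sgn)

lemma Lnorm_scale:
  assumes c: "c > 0" and l: "l > 0" and f: "f \<in> borel_measurable M"
  shows "Lnorm M (ereal l) (\<lambda>x. c * f x) = c * Lnorm M (ereal l) f"
proof -
  have "(\<integral>\<^sup>+ x. ennreal (\<bar>c * f x\<bar> powr l) \<partial>M) = (\<integral>\<^sup>+ x. ennreal (c powr l) * ennreal (\<bar>f x\<bar> powr l) \<partial>M)"
    using c by (intro nn_integral_cong) (simp add: abs_mult powr_mult ennreal_mult)
  also have "\<dots> = ennreal (c powr l) * (\<integral>\<^sup>+ x. ennreal (\<bar>f x\<bar> powr l) \<partial>M)"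
    using f by (intro nn_integral_cmult) measurable
  finally have eq: "(\<integral>\<^sup>+ x. ennreal (\<bar>c * f x\<bar> powr l) \<partial>M) = ennreal (c powr l) * (\<integral>\<^sup>+ x. ennreal (\<bar>f x\<bar> powr l) \<partial>M)" .
  show ?thesis
    using c l unfolding Lnorm_def
    by (simp add: eq enn2real_mult powr_mult powr_powr)
qed

lemma Lnorm_mono_fin:
  assumes "\<And>x. \<bar>f x\<bar> \<le> \<bar>h x\<bar>" and fin: "(\<integral>\<^sup>+ x. ennreal (\<bar>h x\<bar> powr l) \<partial>M) < \<infinity>" and l: "l > 0"
  shows "Lnorm M (ereal l) f \<le> Lnorm M (ereal l) h"
proof -
  have "(\<integral>\<^sup>+ x. ennreal (\<bar>f x\<bar> powr l) \<partial>M) \<le> (\<integral>\<^sup>+ x. ennreal (\<bar>h x\<bar> powr l) \<partial>M)"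
    using assms by (intro nn_integral_mono ennreal_leI powr_mono2) auto
  then have "enn2real (\<integral>\<^sup>+ x. ennreal (\<bar>f x\<bar> powr l) \<partial>M) \<le> enn2real (\<integral>\<^sup>+ x. ennreal (\<bar>h x\<bar> powr l) \<partial>M)"
    using fin by (intro enn2real_mono) auto
  then show ?thesis unfolding Lnorm_def using l by (simp add: powr_mono2)
qed

lemma Lnorm_zero_AE:
  assumes z: "Lnorm M (ereal l) f = 0" and m: "memLp M (ereal l) f" and l: "l > 0"
  shows "AE x in M. f x = 0"
proof -
  have f: "f \<in> borel_measurable M" and fin: "(\<integral>\<^sup>+ x. ennreal (\<bar>f x\<bar> powr l) \<partial>M) < \<infinity>"
    using m by (auto simp: memLp_def)
  have "enn2real (\<integral>\<^sup>+ x. ennreal (\<bar>f x\<bar> powr l) \<partial>M) = 0"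
    using z l by (simp add: Lnorm_def)
  then have "(\<integral>\<^sup>+ x. ennreal (\<bar>f x\<bar> powr l) \<partial>M) = 0"
    using fin by (auto simp: enn2real_eq_0_iff)
  then have "AE x in M. ennreal (\<bar>f x\<bar> powr l) = 0"
    using f by (subst (asm) nn_integral_0_iff_AE) auto
  then show ?thesis by eventually_elim simp
qed

lemma Lnorm_AE0:
  assumes z: "AE x in M. f x = 0" and f: "f \<in> borel_measurable M"
  shows "Lnorm M p f = 0"
proof (cases "p = \<infinity>")
  case True
  have "esssup M (\<lambda>x. ereal \<bar>f x\<bar>) \<le> 0"
    by (rule esssup_I) (use f z in \<open>auto elim: eventually_mono\<close>)
  then have "real_of_ereal (esssup M (\<lambda>x. ereal \<bar>f x\<bar>)) \<le> 0"
    by (cases "esssup M (\<lambda>x. ereal \<bar>f x\<bar>)") auto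
  moreover have "Lnorm M p f = real_of_ereal (esssup M (\<lambda>x. ereal \<bar>f x\<bar>))" using True by (simp add: Lnorm_def)
  ultimately show ?thesis using Lnorm_nonneg[of M p f] by linarith
next
  case False
  have "(\<integral>\<^sup>+ x. ennreal (\<bar>f x\<bar> powr real_of_ereal p) \<partial>M) = (\<integral>\<^sup>+ x. 0 \<partial>M)"
    by (rule nn_integral_cong_AE) (use z in \<open>auto elim: eventually_mono\<close>)
  then show ?thesis using False by (simp add: Lnorm_def)
qed

lemma young_pt:
  fixes y A B a b l p q :: real
  assumes y: "y > 0" and A: "A > 0" and B: "B > 0" and a: "a \<ge> 0" and b: "b \<ge> 0" and ab: "a + b = 1"
    and e: "l * a + p * b = q"
  shows "y powr q \<le> A powr a * B powr b * (a * (y powr l / A) + b * (y powr p / B))"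
proof -
  have "(y powr l / A) powr a * (y powr p / B) powr b \<le> a * (y powr l / A) + b * (y powr p / B)"
    using y A B a b ab by (intro Youngs_inequality_0) auto
  moreover have "(y powr l / A) powr a * (y powr p / B) powr b = y powr q / (A powr a * B powr b)"
    using y A B e[symmetric] by (simp add: powr_divide powr_powr powr_add mult.commute)
  ultimately have "y powr q / (A powr a * B powr b) \<le> a * (y powr l / A) + b * (y powr p / B)" by simp
  then show ?thesis using A B by (simp add: pos_divide_le_eq mult.commute)
qed


lemma interp_fin:
  assumes f: "f \<in> borel_measurable M" and lq: "0 < l" "l < q" "q < p"
    and finl: "(\<integral>\<^sup>+ x. ennreal (\<bar>f x\<bar> powr l) \<partial>M) < \<infinity>"
    and finp: "(\<integral>\<^sup>+ x. ennreal (\<bar>f x\<bar> powr p) \<partial>M) < \<infinity>"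
  shows "Lnorm M (ereal q) f \<le> Lnorm M (ereal l) f powr ((1/q - 1/p)/(1/l - 1/p))
           * Lnorm M (ereal p) f powr (1 - (1/q - 1/p)/(1/l - 1/p))"
proof -
  define \<eta> where "\<eta> = (1/q - 1/p)/(1/l - 1/p)"
  define A where "A = enn2real (\<integral>\<^sup>+ x. ennreal (\<bar>f x\<bar> powr l) \<partial>M)"
  define B where "B = enn2real (\<integral>\<^sup>+ x. ennreal (\<bar>f x\<bar> powr p) \<partial>M)"
  define a where "a = \<eta> * q / l"
  define b where "b = (1 - \<eta>) * q / p"
  have lp: "1/p < 1/q" "1/q < 1/l" using lq by (auto simp: divide_strict_left_mono)
  have n1: "0 < 1/q - 1/p" "1/q - 1/p < 1/l - 1/p" using lp by auto
  have \<eta>: "0 < \<eta>" "\<eta> < 1" using n1 unfolding \<eta>_def by (auto simp: divide_less_eq_1)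
  have a: "a \<ge> 0" and b: "b \<ge> 0" using \<eta> lq unfolding a_def b_def by auto
  have ab: "a + b = 1"
  proof -
    have D: "1/l - 1/p \<noteq> 0" using n1 by linarith
    have h: "\<eta> * (1/l - 1/p) = 1/q - 1/p" using D unfolding \<eta>_def by simp
    have "a + b = q * (\<eta> * (1/l - 1/p)) + q/p" unfolding a_def b_def using lq by (simp add: field_simps)
    also have "\<dots> = 1" unfolding h using lq by (simp add: right_diff_distrib)
    finally show ?thesis .
  qed
  have e: "l * a + p * b = q" using lq unfolding a_def b_def by (simp add: field_simps)
  have Aeq: "(\<integral>\<^sup>+ x. ennreal (\<bar>f x\<bar> powr l) \<partial>M) = ennreal A" using finl unfolding A_def by simp
  have Beq: "(\<integral>\<^sup>+ x. ennreal (\<bar>f x\<bar> powr p) \<partial>M) = ennreal B" using finp unfolding B_def by simp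
  have A0: "A \<ge> 0" and B0: "B \<ge> 0" unfolding A_def B_def by auto
  have rhs: "Lnorm M (ereal l) f powr \<eta> * Lnorm M (ereal p) f powr (1 - \<eta>) = A powr (a / q) * B powr (b / q)"
    using lq unfolding Lnorm_def a_def b_def
    by (simp add: powr_powr A_def B_def)
  show ?thesis
  proof (cases "A = 0 \<or> B = 0")
    case True
    have "AE x in M. f x = 0"
    proof (cases "A = 0")
      case True
      then have "(\<integral>\<^sup>+ x. ennreal (\<bar>f x\<bar> powr l) \<partial>M) = 0" using Aeq by simp
      then have "AE x in M. ennreal (\<bar>f x\<bar> powr l) = 0"
        using f by (subst (asm) nn_integral_0_iff_AE) auto
      then show ?thesis by eventually_elim simp
    next
      case False
      then have "B = 0" using True by simp
      then have "(\<integral>\<^sup>+ x. ennreal (\<bar>f x\<bar> powr p) \<partial>M) = 0" using Beq by simp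
      then have "AE x in M. ennreal (\<bar>f x\<bar> powr p) = 0"
        using f by (subst (asm) nn_integral_0_iff_AE) auto
      then show ?thesis by eventually_elim simp
    qed
    then have "Lnorm M (ereal q) f = 0" using f by (rule Lnorm_AE0)
    then show ?thesis unfolding \<eta>_def[symmetric] by simp
  next
    case False
    then have Ap: "A > 0" and Bp: "B > 0" using A0 B0 by auto
    define K where "K = A powr a * B powr b"
    have K0: "K \<ge> 0" unfolding K_def by simp
    have pt: "ennreal (\<bar>f x\<bar> powr q) \<le> ennreal (K * a / A) * ennreal (\<bar>f x\<bar> powr l) + ennreal (K * b / B) * ennreal (\<bar>f x\<bar> powr p)" for x
    proof (cases "f x = 0")
      case True then show ?thesis using lq by simp
    next
      case False
      have "\<bar>f x\<bar> powr q \<le> K * (a * (\<bar>f x\<bar> powr l / A) + b * (\<bar>f x\<bar> powr p / B))"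
        unfolding K_def using young_pt[of "\<bar>f x\<bar>" A B a b l p q] False Ap Bp a b ab e by simp
      also have "\<dots> = (K * a / A) * \<bar>f x\<bar> powr l + (K * b / B) * \<bar>f x\<bar> powr p"
        by (simp add: field_simps)
      finally show ?thesis using K0 a b Ap Bp
        by (simp add: ennreal_mult[symmetric] ennreal_plus[symmetric] del: ennreal_plus)
    qed
    have "(\<integral>\<^sup>+ x. ennreal (\<bar>f x\<bar> powr q) \<partial>M) \<le> (\<integral>\<^sup>+ x. ennreal (K * a / A) * ennreal (\<bar>f x\<bar> powr l) + ennreal (K * b / B) * ennreal (\<bar>f x\<bar> powr p) \<partial>M)"
      by (intro nn_integral_mono pt)
    also have "\<dots> = ennreal (K * a / A) * (\<integral>\<^sup>+ x. ennreal (\<bar>f x\<bar> powr l) \<partial>M) + ennreal (K * b / B) * (\<integral>\<^sup>+ x. ennreal (\<bar>f x\<bar> powr p) \<partial>M)"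
      using f by (simp add: nn_integral_add nn_integral_cmult)
    also have "\<dots> = ennreal K"
      unfolding Aeq Beq using K0 a b Ap Bp ab
      by (simp add: ennreal_mult[symmetric] ennreal_plus[symmetric] distrib_left[symmetric] del: ennreal_plus)
    finally have I: "(\<integral>\<^sup>+ x. ennreal (\<bar>f x\<bar> powr q) \<partial>M) \<le> ennreal K" .
    have "enn2real (\<integral>\<^sup>+ x. ennreal (\<bar>f x\<bar> powr q) \<partial>M) \<le> K"
      using enn2real_mono[OF I] K0 by simp
    then have "Lnorm M (ereal q) f \<le> K powr (1/q)"
      unfolding Lnorm_def using lq by (simp add: powr_mono2)
    also have "K powr (1/q) = A powr (a / q) * B powr (b / q)"
      unfolding K_def using A0 B0 by (simp add: powr_mult powr_powr)
    finally show ?thesis using rhs unfolding \<eta>_def by simp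
  qed
qed

lemma interp_inf:
  assumes f: "f \<in> borel_measurable M" and lq: "0 < l" "l < q"
    and finl: "(\<integral>\<^sup>+ x. ennreal (\<bar>f x\<bar> powr l) \<partial>M) < \<infinity>"
    and fini: "esssup M (\<lambda>x. ereal \<bar>f x\<bar>) < \<infinity>"
  shows "Lnorm M (ereal q) f \<le> Lnorm M (ereal l) f powr (l / q) * Lnorm M \<infinity> f powr (1 - l / q)"
proof -
  define K where "K = Lnorm M \<infinity> f"
  define A where "A = enn2real (\<integral>\<^sup>+ x. ennreal (\<bar>f x\<bar> powr l) \<partial>M)"
  have K0: "K \<ge> 0" unfolding K_def by (rule Lnorm_nonneg)
  have A0: "A \<ge> 0" unfolding A_def by simp
  have "AE x in M. ereal \<bar>f x\<bar> \<le> esssup M (\<lambda>x. ereal \<bar>f x\<bar>)" by (rule esssup_AE)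
  then have AEK: "AE x in M. \<bar>f x\<bar> \<le> K"
  proof eventually_elim
    fix x assume "ereal \<bar>f x\<bar> \<le> esssup M (\<lambda>x. ereal \<bar>f x\<bar>)"
    then show "\<bar>f x\<bar> \<le> K" using fini unfolding K_def Lnorm_def
      by (cases "esssup M (\<lambda>x. ereal \<bar>f x\<bar>)") auto
  qed
  have "AE x in M. ennreal (\<bar>f x\<bar> powr q) \<le> ennreal (K powr (q - l)) * ennreal (\<bar>f x\<bar> powr l)"
    using AEK
  proof eventually_elim
    fix x assume x: "\<bar>f x\<bar> \<le> K"
    have "\<bar>f x\<bar> powr q = \<bar>f x\<bar> powr (q - l) * \<bar>f x\<bar> powr l" by (simp add: powr_add[symmetric])
    also have "\<dots> \<le> K powr (q - l) * \<bar>f x\<bar> powr l"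
      using x lq by (intro mult_right_mono powr_mono2) auto
    finally show "ennreal (\<bar>f x\<bar> powr q) \<le> ennreal (K powr (q - l)) * ennreal (\<bar>f x\<bar> powr l)"
      by (simp add: ennreal_mult[symmetric])
  qed
  then have "(\<integral>\<^sup>+ x. ennreal (\<bar>f x\<bar> powr q) \<partial>M) \<le> (\<integral>\<^sup>+ x. ennreal (K powr (q - l)) * ennreal (\<bar>f x\<bar> powr l) \<partial>M)"
    by (rule nn_integral_mono_AE)
  also have "\<dots> = ennreal (K powr (q - l)) * ennreal A"
    using f finl unfolding A_def by (simp add: nn_integral_cmult)
  also have "\<dots> = ennreal (K powr (q - l) * A)" using A0 by (simp add: ennreal_mult)
  finally have I: "(\<integral>\<^sup>+ x. ennreal (\<bar>f x\<bar> powr q) \<partial>M) \<le> ennreal (K powr (q - l) * A)" .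
  have "enn2real (\<integral>\<^sup>+ x. ennreal (\<bar>f x\<bar> powr q) \<partial>M) \<le> K powr (q - l) * A"
    using enn2real_mono[OF I] A0 by simp
  then have "Lnorm M (ereal q) f \<le> (K powr (q - l) * A) powr (1/q)"
    unfolding Lnorm_def using lq by (simp add: powr_mono2)
  also have "\<dots> = (A powr (1/l)) powr (l/q) * K powr (1 - l/q)"
    using lq A0 K0 by (simp add: powr_mult powr_powr diff_divide_distrib mult.commute)
  finally show ?thesis unfolding K_def A_def Lnorm_def using lq by simp
qed


lemma interp:
  assumes ml: "memLp M (ereal l) f" and mr: "memLp M r f" and lq: "1 \<le> l" "l < q" "ereal q < r"
  shows "Lnorm M (ereal q) f \<le> Lnorm M (ereal l) f powr ((1/q - exp_inv r)/(1/l - exp_inv r))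
           * Lnorm M r f powr (1 - (1/q - exp_inv r)/(1/l - exp_inv r))"
proof (cases "r = \<infinity>")
  case True
  have f: "f \<in> borel_measurable M" and fin: "(\<integral>\<^sup>+ x. ennreal (\<bar>f x\<bar> powr l) \<partial>M) < \<infinity>"
    using ml by (auto simp: memLp_def)
  have fi: "esssup M (\<lambda>x. ereal \<bar>f x\<bar>) < \<infinity>" using mr True by (simp add: memLp_def)
  have "(1/q - exp_inv r)/(1/l - exp_inv r) = l / q" using True lq by (simp add: exp_inv_def)
  then show ?thesis using interp_inf[OF f _ lq(2) fin fi] lq True by simp
next
  case False
  then obtain p where p: "r = ereal p" using lq(3) by (cases r) auto
  have qp: "q < p" using lq(3) p by simp
  have f: "f \<in> borel_measurable M" and fin: "(\<integral>\<^sup>+ x. ennreal (\<bar>f x\<bar> powr l) \<partial>M) < \<infinity>"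
    using ml by (auto simp: memLp_def)
  have finp: "(\<integral>\<^sup>+ x. ennreal (\<bar>f x\<bar> powr p) \<partial>M) < \<infinity>" using mr p by (simp add: memLp_def)
  have "exp_inv r = 1 / p" using p by (simp add: exp_inv_def)
  then show ?thesis using interp_fin[OF f _ lq(2) qp fin finp] lq p by simp
qed

lemma core:
  fixes v W :: "real \<Rightarrow> real"
  assumes th: "0 < \<theta>" "\<theta> < 1" and A: "A \<ge> 0" and b: "b \<ge> 0" and t: "t > 0"
    and Wpos: "\<And>s. s \<in> {0<..t} \<Longrightarrow> W s \<ge> wmin" and wmin: "wmin > 0"
    and vb: "\<And>s. s \<in> {0<..t} \<Longrightarrow> 0 \<le> v s \<and> v s \<le> V"
    and rec: "\<And>s. s \<in> {0<..t} \<Longrightarrow> v s \<le> A * W s * (v (s/2) / W (s/2)) powr (1-\<theta>) + b * W s"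
  shows "v t \<le> (A + b powr \<theta>) powr (1/\<theta>) * W t"
proof -
  define R where "R = (\<lambda>s. v s / W s) ` {0<..t}"
  define \<psi> where "\<psi> = Sup R"
  have tin: "t \<in> {0<..t}" using t by simp
  have V0: "V \<ge> 0" using vb[OF tin] by linarith
  have bdd: "bdd_above R"
  proof
    fix x assume "x \<in> R"
    then obtain s where s: "s \<in> {0<..t}" "x = v s / W s" unfolding R_def by auto
    have "v s / W s \<le> V / wmin"
      using vb[OF s(1)] Wpos[OF s(1)] wmin V0 by (intro frac_le) auto
    then show "x \<le> V / wmin" using s by simp
  qed
  have ne: "R \<noteq> {}" unfolding R_def using tin by auto
  have up: "v s / W s \<le> \<psi>" if "s \<in> {0<..t}" for s
    unfolding \<psi>_def using that bdd by (intro cSup_upper) (auto simp: R_def)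
  have rat0: "0 \<le> v s / W s" if "s \<in> {0<..t}" for s
    using vb[OF that] Wpos[OF that] wmin by simp
  have psi0: "\<psi> \<ge> 0" using up[OF tin] rat0[OF tin] by linarith
  have step: "v s / W s \<le> A * \<psi> powr (1-\<theta>) + b" if s: "s \<in> {0<..t}" for s
  proof -
    have s2: "s/2 \<in> {0<..t}" using s by auto
    have Wp: "W s > 0" using Wpos[OF s] wmin by linarith
    have "(v (s/2) / W (s/2)) powr (1-\<theta>) \<le> \<psi> powr (1-\<theta>)"
      using up[OF s2] rat0[OF s2] th by (intro powr_mono2) auto
    then have "v s \<le> A * W s * \<psi> powr (1-\<theta>) + b * W s"
      using rec[OF s] A Wp by (smt (verit) mult_left_mono mult_nonneg_nonneg)
    also have "\<dots> = W s * (A * \<psi> powr (1-\<theta>) + b)" by (simp add: algebra_simps)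
    finally show ?thesis using Wp by (simp add: pos_divide_le_eq mult.commute)
  qed
  have "Sup R \<le> A * \<psi> powr (1-\<theta>) + b"
    using ne by (intro cSup_least) (auto simp: R_def intro: step)
  then have psi: "\<psi> \<le> A * \<psi> powr (1-\<theta>) + b" unfolding \<psi>_def .
  define S where "S = A + b powr \<theta>"
  have S0: "S \<ge> 0" unfolding S_def using A by simp
  have psiS: "\<psi> \<le> S powr (1/\<theta>)"
  proof (rule ccontr)
    assume "\<not> ?thesis"
    then have gt: "S powr (1/\<theta>) < \<psi>" by simp
    then have psip: "\<psi> > 0" using S0 by (smt (verit) powr_ge_zero)
    have "(S powr (1/\<theta>)) powr \<theta> < \<psi> powr \<theta>"
      using gt th by (intro powr_less_mono2) auto
    then have Sl: "S < \<psi> powr \<theta>" using S0 th by (simp add: powr_powr)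
    have pp: "\<psi> powr (1-\<theta>) > 0" using psip by simp
    have psi_eq: "\<psi> = \<psi> powr \<theta> * \<psi> powr (1-\<theta>)" using psip by (simp add: powr_add[symmetric])
    have "S * \<psi> powr (1-\<theta>) < \<psi>"
      using Sl pp by (subst psi_eq) (intro mult_strict_right_mono)
    moreover have "b \<le> b powr \<theta> * \<psi> powr (1-\<theta>)"
    proof (cases "b = 0")
      case False
      then have bp: "b > 0" using b by simp
      have "b powr \<theta> \<le> S" unfolding S_def using A by simp
      then have "(b powr \<theta>) powr (1/\<theta>) \<le> S powr (1/\<theta>)" using th bp by (intro powr_mono2) auto
      then have "b \<le> S powr (1/\<theta>)" using th bp by (simp add: powr_powr)
      then have "b \<le> \<psi>" using gt by simp
      then have "b powr (1-\<theta>) \<le> \<psi> powr (1-\<theta>)" using th bp by (intro powr_mono2) auto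
      then have "b powr \<theta> * b powr (1-\<theta>) \<le> b powr \<theta> * \<psi> powr (1-\<theta>)"
        by (intro mult_left_mono) auto
      moreover have "b powr \<theta> * b powr (1-\<theta>) = b" using bp by (simp add: powr_add[symmetric])
      ultimately show ?thesis by simp
    qed simp
    ultimately have "A * \<psi> powr (1-\<theta>) + b < \<psi>" unfolding S_def by (simp add: algebra_simps)
    with psi show False by simp
  qed
  have Wt: "W t > 0" using Wpos[OF tin] wmin by linarith
  have "v t = (v t / W t) * W t" using Wt by simp
  also have "\<dots> \<le> \<psi> * W t" using up[OF tin] Wt by (intro mult_right_mono) auto
  also have "\<dots> \<le> S powr (1/\<theta>) * W t" using psiS Wt by (intro mult_right_mono) auto
  finally show ?thesis unfolding S_def .
qed

lemma epowr_mono: "x \<le> y \<Longrightarrow> 0 \<le> p \<Longrightarrow> epowr x p \<le> epowr y p"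
proof (cases "y = \<infinity>")
  case False
  assume xy: "x \<le> y" and p: "0 \<le> p"
  then have "x \<noteq> \<infinity>" using False by (auto simp: top_unique)
  moreover have "enn2real x \<le> enn2real y" using xy False by (intro enn2real_mono) (auto simp: less_top)
  ultimately show ?thesis using False p by (simp add: epowr_def powr_mono2 ennreal_leI)
qed (simp add: epowr_def)

lemma epowr_ennreal: "0 \<le> x \<Longrightarrow> epowr (ennreal x) p = ennreal (x powr p)"
  by (simp add: epowr_def)

lemma max_powr: "0 \<le> (a::real) \<Longrightarrow> 0 \<le> b \<Longrightarrow> 0 \<le> k \<Longrightarrow> max a b powr k = max (a powr k) (b powr k)"
proof (cases "a \<le> b")
  case True
  assume "0 \<le> a" "0 \<le> b" "0 \<le> k"
  then have "a powr k \<le> b powr k" using True by (auto intro: powr_mono2)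
  then show ?thesis using True by (simp add: max_def)
next
  case False
  assume "0 \<le> a" "0 \<le> b" "0 \<le> k"
  then have "b powr k \<le> a powr k" using False by (auto intro: powr_mono2)
  then show ?thesis using False by (simp add: max_def)
qed


lemma set_int_nonneg:
  fixes f :: "'b \<Rightarrow> real"
  assumes "\<And>x. 0 \<le> f x" shows "0 \<le> (LINT x:A|M. f x)"
  unfolding set_lebesgue_integral_def
  by (rule integral_nonneg_AE) (use assms in \<open>auto intro!: AE_I2 simp: indicator_def\<close>)

lemma set_integrable_bounded_factor:
  fixes f h :: "'b \<Rightarrow> real"
  assumes f: "set_integrable M A f" and h: "h \<in> borel_measurable M" and K: "\<And>x. x \<in> A \<Longrightarrow> \<bar>h x\<bar> \<le> K"
  shows "set_integrable M A (\<lambda>x. h x * f x)"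
proof (rule set_integrable_bound[of M A "\<lambda>x. K * f x"])
  show "set_integrable M A (\<lambda>x. K * f x)" using f by auto
  have "(\<lambda>x. indicator A x *\<^sub>R f x) \<in> borel_measurable M"
    using f unfolding set_integrable_def by (rule borel_measurable_integrable)
  then have "(\<lambda>x. h x * (indicator A x *\<^sub>R f x)) \<in> borel_measurable M"
    using h by (intro borel_measurable_times)
  moreover have "(\<lambda>x. h x * (indicator A x *\<^sub>R f x)) = (\<lambda>x. indicator A x *\<^sub>R (h x * f x))"
    by (auto simp: fun_eq_iff)
  ultimately show "set_borel_measurable M A (\<lambda>x. h x * f x)"
    unfolding set_borel_measurable_def by simp
  show "AE x in M. x \<in> A \<longrightarrow> norm (h x * f x) \<le> norm (K * f x)"
  proof (intro AE_I2 impI)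
    fix x assume x: "x \<in> A"
    have "\<bar>h x\<bar> * \<bar>f x\<bar> \<le> K * \<bar>f x\<bar>" using K[OF x] by (intro mult_right_mono) auto
    also have "\<dots> \<le> \<bar>K\<bar> * \<bar>f x\<bar>" by (intro mult_right_mono) auto
    finally show "norm (h x * f x) \<le> norm (K * f x)" by (simp add: abs_mult)
  qed
qed


theorem theorem4p6:
  fixes M :: "'a measure" and l q T \<omega> \<alpha> \<gamma> \<gamma>s :: real and r :: ereal
    and u g :: "real \<Rightarrow> 'a \<Rightarrow> real" and c1 c2 :: "real \<Rightarrow> real"
  assumes sf: "sigma_finite_measure M"
    and exps: "1 \<le> l" "l < q" "ereal q < r" and T: "T > 0"
    and g_meas: "(\<lambda>(\<tau>, x). g \<tau> x) \<in> borel_measurable (restrict_space lborel {0..T} \<Otimes>\<^sub>M M)"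
    and g_Lp: "AE \<tau> in lborel. \<tau> \<in> {0..T} \<longrightarrow> memLp M (ereal l) (g \<tau>) \<and> memLp M (ereal q) (g \<tau>)"
    and g_int_l: "set_integrable lborel {0..T} (\<lambda>\<tau>. Lnorm M (ereal l) (g \<tau>))"
    and g_int_q: "set_integrable lborel {0..T} (\<lambda>\<tau>. Lnorm M (ereal q) (g \<tau>))"
    and u_meas: "(\<lambda>(t, x). u t x) \<in> borel_measurable (restrict_space lborel {0..T} \<Otimes>\<^sub>M M)"
    and u_Lp: "\<forall>t\<in>{0..T}. memLp M (ereal l) (u t) \<and> memLp M r (u t)"
    and u_bdd: "\<exists>C. \<forall>t\<in>{0..T}. Lnorm M (ereal l) (u t) \<le> C \<and> Lnorm M r (u t) \<le> C"
    and \<omega>: "\<omega> \<ge> 0"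
    and Gineq: "\<And>s t lam. 0 \<le> s \<Longrightarrow> s \<le> t \<Longrightarrow> t \<le> T \<Longrightarrow> lam \<ge> 0 \<Longrightarrow>
        Lnorm M (ereal l) (\<lambda>x. G lam (exp (-\<omega> * t) * u t x))
        \<le> Lnorm M (ereal l) (\<lambda>x. G lam (exp (-\<omega> * s) * u s x))
          + (LINT \<tau>:{s..t}|lborel. exp (-\<omega> * \<tau>) *
               Lnorm M (ereal l) (\<lambda>x. g \<tau> x * indicator {y. exp (-\<omega> * \<tau>) * \<bar>u \<tau> y\<bar> > lam} x))"
    and c1_mono: "mono_on {0..T} c1" and c2_mono: "mono_on {0..T} c2"
    and c1_pos: "\<forall>t\<in>{0..T}. c1 t > 0" and c2_nonneg: "\<forall>t\<in>{0..T}. c2 t \<ge> 0"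
    and \<alpha>: "\<alpha> \<ge> 0" and \<gamma>: "0 < \<gamma>s" "\<gamma>s \<le> \<gamma>"
    and smoothing: "\<And>t. t \<in> {0<..T} \<Longrightarrow>
        Lnorm M r (u t) \<le> max
          (c1 (t/2) * (2/t + \<omega>) powr \<alpha> *
             (Lnorm M (ereal q) (u (t/2)) + (LINT \<tau>:{t/2..t}|lborel. Lnorm M (ereal q) (g \<tau>))) powr \<gamma>)
          (c2 (t/2) *
             (Lnorm M (ereal q) (u (t/2)) + (LINT \<tau>:{t/2..t}|lborel. Lnorm M (ereal q) (g \<tau>))) powr \<gamma>s)"
    and \<theta>_pos: "1 - \<gamma> * (1/l - 1/q) / (1/l - exp_inv r) > 0"
  shows "\<forall>t\<in>{0<..T}.
    (let \<theta> = 1 - \<gamma> * (1/l - 1/q) / (1/l - exp_inv r);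
         \<theta>l = (1/q - exp_inv r) / (1/l - exp_inv r);
         E = (\<lambda>s. exp (\<omega> * s) * Lnorm M (ereal l) (u 0)
                   + (LINT \<tau>:{0..s}|lborel. exp (\<omega> * (s - \<tau>)) * Lnorm M (ereal l) (g \<tau>)));
         Mf = (\<lambda>s. max (c1 s powr (1/\<gamma>) * (1/s + \<omega>) powr (\<alpha>/\<gamma>)) (c2 s powr (1/\<gamma>)));
         gq = (\<lambda>a b. LINT \<tau>:{a..b}|lborel. Lnorm M (ereal q) (g \<tau>));
         N = (\<lambda>s. SUP s'\<in>{0<..s}.
                 ennreal (Mf (s'/2) * gq (s'/2) s' + c2 (s'/2) powr (1/\<gamma>))
                 / ennreal (Mf s' powr (1/\<theta>) * E s' powr (\<theta>l/\<theta>)))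
     in ennreal (Lnorm M r (u t))
        \<le> ennreal (2 powr \<gamma>)
          * epowr (ennreal (2 powr (\<alpha> / (\<gamma> * \<theta>))) + (SUP s\<in>{0<..t}. epowr (N s) \<theta>)) (\<gamma>/\<theta>)
          * ennreal (max (c1 t powr (1/\<theta>) * (1/t + \<omega>) powr (\<alpha>/\<theta>)) (c2 t powr (1/\<theta>)))
          * ennreal (E t powr (\<theta>l * \<gamma> / \<theta>)))"
proof -
  define \<theta> where "\<theta> = 1 - \<gamma> * (1/l - 1/q) / (1/l - exp_inv r)"
  define \<theta>l where "\<theta>l = (1/q - exp_inv r) / (1/l - exp_inv r)"
  define E where "E = (\<lambda>s. exp (\<omega> * s) * Lnorm M (ereal l) (u 0)
                   + (LINT \<tau>:{0..s}|lborel. exp (\<omega> * (s - \<tau>)) * Lnorm M (ereal l) (g \<tau>)))"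
  define Mf where "Mf = (\<lambda>s. max (c1 s powr (1/\<gamma>) * (1/s + \<omega>) powr (\<alpha>/\<gamma>)) (c2 s powr (1/\<gamma>)))"
  define gq where "gq = (\<lambda>a b. LINT \<tau>:{a..b}|lborel. Lnorm M (ereal q) (g \<tau>))"
  define N where "N = (\<lambda>s. SUP s'\<in>{0<..s}.
                 ennreal (Mf (s'/2) * gq (s'/2) s' + c2 (s'/2) powr (1/\<gamma>))
                 / ennreal (Mf s' powr (1/\<theta>) * E s' powr (\<theta>l/\<theta>)))"
  define Lg where "Lg = (\<lambda>\<tau>. Lnorm M (ereal l) (g \<tau>))"
  have l0: "l > 0" and q0: "q > 0" using exps by auto
  have gam: "\<gamma> > 0" using \<gamma> by linarith
  have lq': "1/q < 1/l" using exps l0 by (simp add: divide_strict_left_mono)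
  have e_props: "0 \<le> exp_inv r \<and> exp_inv r < 1/q"
  proof (cases "r = \<infinity>")
    case True then show ?thesis using q0 by (simp add: exp_inv_def)
  next
    case False
    then obtain p where p: "r = ereal p" using exps(3) by (cases r) auto
    have qp: "q < p" using exps(3) p by simp
    then have "1/p < 1/q" using q0 by (simp add: divide_strict_left_mono)
    then show ?thesis using p qp q0 by (simp add: exp_inv_def)
  qed
  have D: "1/l - exp_inv r > 0" using e_props lq' by linarith
  have th0: "\<theta> > 0" using \<theta>_pos unfolding \<theta>_def .
  have th1: "\<theta> < 1" unfolding \<theta>_def using gam lq' D by simp
  have thl0: "\<theta>l > 0" unfolding \<theta>l_def using e_props D by simp
  have gth: "\<gamma> * (1 - \<theta>l) = 1 - \<theta>"
    unfolding \<theta>_def \<theta>l_def using D by (simp add: field_simps)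
  have Lnn: "\<And>M p f. Lnorm M p f \<ge> 0" by (rule Lnorm_nonneg)
  have um: "u \<sigma> \<in> borel_measurable M" if "\<sigma> \<in> {0..T}" for \<sigma>
    using u_Lp that by (auto simp: memLp_def)
  have int_exp: "set_integrable lborel {0..s} (\<lambda>\<tau>. exp (\<omega>*(s-\<tau>)) * Lg \<tau>)" if s: "0 \<le> s" "s \<le> T" for s
  proof -
    have i1: "set_integrable lborel {0..s} Lg"
      by (rule set_integrable_subset[OF g_int_l[folded Lg_def]]) (use s in auto)
    have "set_integrable lborel {0..s} (\<lambda>\<tau>. exp (\<omega>*(s-\<tau>)) * Lg \<tau>)"
    proof (rule set_integrable_bounded_factor[OF i1])
      show "(\<lambda>\<tau>. exp (\<omega>*(s-\<tau>))) \<in> borel_measurable lborel" by measurable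
      fix x assume x: "x \<in> {0..s}"
      have "\<omega> * (s - x) \<le> \<omega> * s" using \<omega> x by (simp add: right_diff_distrib)
      then show "\<bar>exp (\<omega> * (s - x))\<bar> \<le> exp (\<omega> * s)" by simp
    qed
    then show ?thesis .
  qed
  have int_neg: "set_integrable lborel {0..s} (\<lambda>\<tau>. exp (-\<omega>*\<tau>) * Lg \<tau>)" if s: "0 \<le> s" "s \<le> T" for s
  proof -
    have i1: "set_integrable lborel {0..s} Lg"
      by (rule set_integrable_subset[OF g_int_l[folded Lg_def]]) (use s in auto)
    show ?thesis
    proof (rule set_integrable_bounded_factor[OF i1])
      show "(\<lambda>\<tau>. exp (-\<omega>*\<tau>)) \<in> borel_measurable lborel" by measurable
      fix x assume x: "x \<in> {0..s}"
      have "-\<omega>*x \<le> 0" using \<omega> x by simp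
      then show "\<bar>exp (-\<omega>*x)\<bar> \<le> 1" by simp
    qed
  qed
  have E_nn: "E s \<ge> 0" for s
    unfolding E_def by (intro add_nonneg_nonneg mult_nonneg_nonneg set_int_nonneg) (auto simp: Lnn)
  have E_mono: "E \<sigma> \<le> E s" if s: "0 \<le> \<sigma>" "\<sigma> \<le> s" "s \<le> T" for \<sigma> s
  proof -
    have "exp (\<omega> * \<sigma>) \<le> exp (\<omega> * s)" using s \<omega> by (simp add: mult_left_mono)
    then have t1: "exp (\<omega> * \<sigma>) * Lnorm M (ereal l) (u 0) \<le> exp (\<omega> * s) * Lnorm M (ereal l) (u 0)"
      by (intro mult_right_mono) (auto simp: Lnn)
    have "(LINT \<tau>:{0..\<sigma>}|lborel. exp (\<omega> * (\<sigma> - \<tau>)) * Lg \<tau>) \<le> (LINT \<tau>:{0..s}|lborel. exp (\<omega> * (s - \<tau>)) * Lg \<tau>)"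
      unfolding set_lebesgue_integral_def
    proof (rule integral_mono)
      show "integrable lborel (\<lambda>x. indicat_real {0..\<sigma>} x *\<^sub>R (exp (\<omega> * (\<sigma> - x)) * Lg x))"
        using int_exp[of \<sigma>] s unfolding set_integrable_def by simp
      show "integrable lborel (\<lambda>x. indicat_real {0..s} x *\<^sub>R (exp (\<omega> * (s - x)) * Lg x))"
        using int_exp[of s] s unfolding set_integrable_def by simp
      fix x
      have ex: "exp (\<omega> * (\<sigma> - x)) \<le> exp (\<omega> * (s - x))" using s \<omega> by (simp add: mult_left_mono)
      have "0 \<le> exp (\<omega> * (s - x)) * Lg x" unfolding Lg_def by (simp add: Lnn)
      moreover have "exp (\<omega> * (\<sigma> - x)) * Lg x \<le> exp (\<omega> * (s - x)) * Lg x"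
        using ex unfolding Lg_def by (intro mult_right_mono) (auto simp: Lnn)
      ultimately show "indicat_real {0..\<sigma>} x *\<^sub>R (exp (\<omega> * (\<sigma> - x)) * Lg x) \<le> indicat_real {0..s} x *\<^sub>R (exp (\<omega> * (s - x)) * Lg x)"
        using s by (auto simp: indicator_def)
    qed
    then show ?thesis using t1 unfolding E_def Lg_def by simp
  qed
  have u_l: "Lnorm M (ereal l) (u \<sigma>) \<le> E \<sigma>" if s: "0 \<le> \<sigma>" "\<sigma> \<le> T" for \<sigma>
  proof -
    define I where "I = (LINT \<tau>:{0..\<sigma>}|lborel. exp (-\<omega> * \<tau>) *
               Lnorm M (ereal l) (\<lambda>x. g \<tau> x * indicator {y. exp (-\<omega> * \<tau>) * \<bar>u \<tau> y\<bar> > 0} x))"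
    define I' where "I' = (LINT \<tau>:{0..\<sigma>}|lborel. exp (-\<omega> * \<tau>) * Lg \<tau>)"
    have "Lnorm M (ereal l) (\<lambda>x. G 0 (exp (-\<omega> * \<sigma>) * u \<sigma> x))
        \<le> Lnorm M (ereal l) (\<lambda>x. G 0 (exp (-\<omega> * 0) * u 0 x)) + I"
      unfolding I_def by (rule Gineq) (use s in auto)
    then have G1: "exp (-\<omega> * \<sigma>) * Lnorm M (ereal l) (u \<sigma>) \<le> Lnorm M (ereal l) (u 0) + I"
      using Lnorm_scale[of "exp (-\<omega> * \<sigma>)" l "u \<sigma>" M] l0 um[of \<sigma>] s by (simp add: G0)
    have II: "I \<le> I'"
    proof (cases "set_integrable lborel {0..\<sigma>} (\<lambda>\<tau>. exp (-\<omega> * \<tau>) *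
               Lnorm M (ereal l) (\<lambda>x. g \<tau> x * indicator {y. exp (-\<omega> * \<tau>) * \<bar>u \<tau> y\<bar> > 0} x))")
      case True
      show ?thesis unfolding I_def I'_def
      proof (rule set_integral_mono_AE[OF True int_neg[OF s]])
        show "AE x\<in>{0..\<sigma>} in lborel. exp (-\<omega> * x) * Lnorm M (ereal l) (\<lambda>xa. g x xa * indicator {y. exp (-\<omega> * x) * \<bar>u x y\<bar> > 0} xa) \<le> exp (-\<omega> * x) * Lg x"
          using g_Lp
        proof eventually_elim
          case (elim x)
          show ?case
          proof
            assume x: "x \<in> {0..\<sigma>}"
            then have "memLp M (ereal l) (g x)" using elim s by auto
            then have fin: "(\<integral>\<^sup>+ y. ennreal (\<bar>g x y\<bar> powr l) \<partial>M) < \<infinity>" by (simp add: memLp_def)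
            have "Lnorm M (ereal l) (\<lambda>xa. g x xa * indicator {y. exp (-\<omega> * x) * \<bar>u x y\<bar> > 0} xa) \<le> Lg x"
              unfolding Lg_def by (rule Lnorm_mono_fin[OF _ fin l0]) (auto simp: indicator_def)
            then show "exp (-\<omega> * x) * Lnorm M (ereal l) (\<lambda>xa. g x xa * indicator {y. exp (-\<omega> * x) * \<bar>u x y\<bar> > 0} xa) \<le> exp (-\<omega> * x) * Lg x"
              by (intro mult_left_mono) auto
          qed
        qed
      qed
    next
      case False
      then have "I = 0" unfolding I_def set_lebesgue_integral_def set_integrable_def
        by (rule not_integrable_integral_eq)
      moreover have "I' \<ge> 0" unfolding I'_def Lg_def by (intro set_int_nonneg) (auto simp: Lnn)
      ultimately show ?thesis by simp
    qed
    have ee: "exp (\<omega>*\<sigma>) * exp (-\<omega>*\<sigma>) = 1" by (simp add: exp_add[symmetric])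
    have "Lnorm M (ereal l) (u \<sigma>) = exp (\<omega>*\<sigma>) * (exp (-\<omega> * \<sigma>) * Lnorm M (ereal l) (u \<sigma>))"
      using ee by (simp add: mult.assoc[symmetric])
    also have "\<dots> \<le> exp (\<omega>*\<sigma>) * (Lnorm M (ereal l) (u 0) + I')"
      using G1 II by (intro mult_left_mono) auto
    also have "\<dots> = exp (\<omega>*\<sigma>) * Lnorm M (ereal l) (u 0) + exp (\<omega>*\<sigma>) * I'" by (simp add: algebra_simps)
    also have "exp (\<omega>*\<sigma>) * I' = (LINT \<tau>:{0..\<sigma>}|lborel. exp (\<omega>*\<sigma>) * (exp (-\<omega> * \<tau>) * Lg \<tau>))"
      unfolding I'_def by simp
    also have "\<dots> = (LINT \<tau>:{0..\<sigma>}|lborel. exp (\<omega> * (\<sigma> - \<tau>)) * Lg \<tau>)"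
      by (simp add: mult.assoc[symmetric] exp_add[symmetric] right_diff_distrib)
    finally show ?thesis unfolding E_def Lg_def by simp
  qed
  have gq_nn: "gq a b \<ge> 0" for a b unfolding gq_def by (intro set_int_nonneg) (auto simp: Lnn)
  have c1p: "c1 s > 0" and c2n: "c2 s \<ge> 0" if "s \<in> {0..T}" for s using c1_pos c2_nonneg that by auto
  have Mf_nn: "Mf s \<ge> 0" for s unfolding Mf_def by (simp add: le_max_iff_disj)
  define m0 where "m0 = c1 0 powr (1/\<gamma>) * (1/T) powr (\<alpha>/\<gamma>)"
  have m0: "m0 > 0" unfolding m0_def using c1p[of 0] T by simp
  have Mf0: "Mf s \<ge> m0" if s: "s \<in> {0<..T}" for s
  proof -
    have "c1 0 \<le> c1 s" using s by (intro mono_onD[OF c1_mono]) auto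
    then have a: "c1 0 powr (1/\<gamma>) \<le> c1 s powr (1/\<gamma>)" using c1p[of 0] T gam by (intro powr_mono2) auto
    have "1/T \<le> 1/s" using s by (intro divide_left_mono) auto
    then have "1/T \<le> 1/s + \<omega>" using \<omega> by linarith
    then have b: "(1/T) powr (\<alpha>/\<gamma>) \<le> (1/s + \<omega>) powr (\<alpha>/\<gamma>)" using T gam \<alpha> by (intro powr_mono2) auto
    have "m0 \<le> c1 s powr (1/\<gamma>) * (1/s + \<omega>) powr (\<alpha>/\<gamma>)" unfolding m0_def using a b by (intro mult_mono) auto
    then show ?thesis unfolding Mf_def by simp
  qed
  have Mfhalf: "Mf (s/2) \<le> 2 powr (\<alpha>/\<gamma>) * Mf s" if s: "s \<in> {0<..T}" for s
  proof -
    have two: "1 \<le> 2 powr (\<alpha>/\<gamma>)" using \<alpha> gam by (intro ge_one_powr_ge_zero) auto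
    have "c1 (s/2) \<le> c1 s" using s by (intro mono_onD[OF c1_mono]) auto
    then have a: "c1 (s/2) powr (1/\<gamma>) \<le> c1 s powr (1/\<gamma>)" using c1p[of "s/2"] s gam by (intro powr_mono2) auto
    have "1/(s/2) + \<omega> \<le> 2 * (1/s + \<omega>)" using s \<omega> by simp
    then have "(1/(s/2) + \<omega>) powr (\<alpha>/\<gamma>) \<le> (2 * (1/s + \<omega>)) powr (\<alpha>/\<gamma>)" using s \<omega> gam \<alpha> by (intro powr_mono2) auto
    also have "\<dots> = 2 powr (\<alpha>/\<gamma>) * (1/s + \<omega>) powr (\<alpha>/\<gamma>)" by (rule powr_mult; use s \<omega> in auto)
    finally have b: "(1/(s/2) + \<omega>) powr (\<alpha>/\<gamma>) \<le> 2 powr (\<alpha>/\<gamma>) * (1/s + \<omega>) powr (\<alpha>/\<gamma>)" .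
    have "c1 (s/2) powr (1/\<gamma>) * (1/(s/2) + \<omega>) powr (\<alpha>/\<gamma>) \<le> c1 s powr (1/\<gamma>) * (2 powr (\<alpha>/\<gamma>) * (1/s + \<omega>) powr (\<alpha>/\<gamma>))"
      using a b by (intro mult_mono) auto
    also have "\<dots> \<le> 2 powr (\<alpha>/\<gamma>) * Mf s" unfolding Mf_def by (simp add: algebra_simps mult_left_mono)
    finally have A1: "c1 (s/2) powr (1/\<gamma>) * (1/(s/2) + \<omega>) powr (\<alpha>/\<gamma>) \<le> 2 powr (\<alpha>/\<gamma>) * Mf s" .
    have "c2 (s/2) \<le> c2 s" using s by (intro mono_onD[OF c2_mono]) auto
    then have "c2 (s/2) powr (1/\<gamma>) \<le> c2 s powr (1/\<gamma>)" using c2n[of "s/2"] s gam by (intro powr_mono2) auto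
    also have "\<dots> \<le> Mf s" unfolding Mf_def by simp
    also have "\<dots> \<le> 2 powr (\<alpha>/\<gamma>) * Mf s" using two Mf_nn[of s] by (simp add: mult_le_cancel_right1)
    finally have A2: "c2 (s/2) powr (1/\<gamma>) \<le> 2 powr (\<alpha>/\<gamma>) * Mf s" .
    show ?thesis using A1 A2 by (simp add: Mf_def del: divide_divide_eq_right)
  qed
  have smooth': "Lnorm M r (u s) powr (1/\<gamma>) \<le> Mf (s/2) * (Lnorm M (ereal q) (u (s/2)) + gq (s/2) s) + c2 (s/2) powr (1/\<gamma>)"
    if s: "s \<in> {0<..T}" for s
  proof -
    define X where "X = Lnorm M (ereal q) (u (s/2)) + gq (s/2) s"
    have X0: "X \<ge> 0" unfolding X_def using gq_nn by (simp add: Lnn add_nonneg_nonneg)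
    define P1 where "P1 = c1 (s/2) * (2/s + \<omega>) powr \<alpha> * X powr \<gamma>"
    define P2 where "P2 = c2 (s/2) * X powr \<gamma>s"
    have s2: "s/2 \<in> {0..T}" using s by auto
    have sm: "Lnorm M r (u s) \<le> max P1 P2"
      using smoothing[OF s] unfolding X_def gq_def P1_def P2_def by simp
    have P1: "P1 \<ge> 0" unfolding P1_def using c1p[OF s2] by simp
    have P2: "P2 \<ge> 0" unfolding P2_def using c2n[OF s2] by simp
    have "Lnorm M r (u s) powr (1/\<gamma>) \<le> (max P1 P2) powr (1/\<gamma>)"
      using sm gam by (intro powr_mono2) (auto simp: Lnn)
    also have "\<dots> = max (P1 powr (1/\<gamma>)) (P2 powr (1/\<gamma>))"
      using P1 P2 gam by (intro max_powr) auto
    also have "\<dots> \<le> Mf (s/2) * X + c2 (s/2) powr (1/\<gamma>)"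
    proof (rule max.boundedI)
      have "P1 powr (1/\<gamma>) = c1 (s/2) powr (1/\<gamma>) * (2/s + \<omega>) powr (\<alpha>/\<gamma>) * X"
        unfolding P1_def using c1p[OF s2] X0 gam s \<omega>
        by (simp add: powr_mult powr_powr powr_one)
      also have "\<dots> \<le> Mf (s/2) * X"
      proof (rule mult_right_mono[OF _ X0])
        show "c1 (s/2) powr (1/\<gamma>) * (2/s + \<omega>) powr (\<alpha>/\<gamma>) \<le> Mf (s/2)"
          unfolding Mf_def by simp
      qed
      also have "\<dots> \<le> Mf (s/2) * X + c2 (s/2) powr (1/\<gamma>)" by simp
      finally show "P1 powr (1/\<gamma>) \<le> Mf (s/2) * X + c2 (s/2) powr (1/\<gamma>)" .
    next
      have k: "0 < \<gamma>s/\<gamma>" "\<gamma>s/\<gamma> \<le> 1" using \<gamma> gam by auto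
      have Xk: "X powr (\<gamma>s/\<gamma>) \<le> 1 + X"
      proof (cases "X \<le> 1")
        case True
        then have "X powr (\<gamma>s/\<gamma>) \<le> 1" using X0 k by (intro powr_le1) auto
        then show ?thesis using X0 by simp
      next
        case False
        then have "X powr (\<gamma>s/\<gamma>) \<le> X powr 1" using k by (intro powr_mono) auto
        then show ?thesis using X0 by (simp add: powr_one)
      qed
      have "P2 powr (1/\<gamma>) = c2 (s/2) powr (1/\<gamma>) * X powr (\<gamma>s/\<gamma>)"
        unfolding P2_def using c2n[OF s2] X0 gam by (simp add: powr_mult powr_powr)
      also have "\<dots> \<le> c2 (s/2) powr (1/\<gamma>) * (1 + X)"
        using Xk by (intro mult_left_mono) auto
      also have "\<dots> = c2 (s/2) powr (1/\<gamma>) + c2 (s/2) powr (1/\<gamma>) * X" by (simp add: algebra_simps)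
      also have "\<dots> \<le> c2 (s/2) powr (1/\<gamma>) + Mf (s/2) * X"
        using X0 unfolding Mf_def by (intro add_left_mono mult_right_mono) auto
      finally show "P2 powr (1/\<gamma>) \<le> Mf (s/2) * X + c2 (s/2) powr (1/\<gamma>)" by simp
    qed
    finally show ?thesis unfolding X_def .
  qed
  have key: "ennreal (Lnorm M r (u t))
        \<le> ennreal (2 powr \<gamma>)
          * epowr (ennreal (2 powr (\<alpha> / (\<gamma> * \<theta>))) + (SUP s\<in>{0<..t}. epowr (N s) \<theta>)) (\<gamma>/\<theta>)
          * ennreal (max (c1 t powr (1/\<theta>) * (1/t + \<omega>) powr (\<alpha>/\<theta>)) (c2 t powr (1/\<theta>)))
          * ennreal (E t powr (\<theta>l * \<gamma> / \<theta>))" if t: "t \<in> {0<..T}" for t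
  proof (cases "E t = 0")
    case True
    have t0: "t \<in> {0..T}" using t by auto
    have "Lnorm M (ereal l) (u t) = 0" using u_l[of t] t True Lnn[of M "ereal l" "u t"] by auto
    then have "AE x in M. u t x = 0" using u_Lp t0 l0 by (intro Lnorm_zero_AE) auto
    then have "Lnorm M r (u t) = 0" using um[OF t0] by (rule Lnorm_AE0)
    then show ?thesis by simp
  next
    case False
    then have Et: "E t > 0" using E_nn[of t] by simp
    define A0 where "A0 = 2 powr (\<alpha> / (\<gamma> * \<theta>))"
    define B where "B = (SUP s\<in>{0<..t}. epowr (N s) \<theta>)"
    define Q where "Q = max (c1 t powr (1/\<theta>) * (1/t + \<omega>) powr (\<alpha>/\<theta>)) (c2 t powr (1/\<theta>))"
    have tT: "t \<in> {0..T}" using t by auto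
    have "1/t + \<omega> > 0" using t \<omega> by (simp add: add_pos_nonneg)
    then have "c1 t powr (1/\<theta>) * (1/t + \<omega>) powr (\<alpha>/\<theta>) > 0" using c1p[OF tT] by simp
    then have Qp: "Q > 0" unfolding Q_def by (simp add: less_max_iff_disj)
    have A0p: "A0 > 0" unfolding A0_def by simp
    show ?thesis
    proof (cases "B = top")
      case True
      have "epowr (ennreal A0 + B) (\<gamma>/\<theta>) = top" using True by (simp add: epowr_def)
      then have "ennreal (2 powr \<gamma>) * epowr (ennreal A0 + B) (\<gamma>/\<theta>) * ennreal Q * ennreal (E t powr (\<theta>l * \<gamma> / \<theta>)) = top"
        using Qp Et by simp
      then show ?thesis unfolding A0_def B_def Q_def by simp
    next
      case False
      define b where "b = enn2real B"
      have Beq: "B = ennreal b" unfolding b_def using False by (simp add: less_top)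
      have b0: "b \<ge> 0" unfolding b_def by simp
      define num where "num s = Mf (s/2) * gq (s/2) s + c2 (s/2) powr (1/\<gamma>)" for s
      define Wt where "Wt s = Mf s powr (1/\<theta>) * E s powr (\<theta>l/\<theta>)" for s
      have numb: "num s \<le> b powr (1/\<theta>) * Wt s" if s: "s \<in> {0<..t}" for s
      proof -
        have s0: "0 < s" using s by simp
        have num0: "num s \<ge> 0" unfolding num_def using Mf_nn gq_nn by simp
        have Wt0: "Wt s \<ge> 0" unfolding Wt_def by simp
        have h1: "ennreal (num s) / ennreal (Wt s) \<le> N s"
          unfolding N_def num_def Wt_def using s0 by (intro SUP_upper) auto
        have h2: "epowr (N s) \<theta> \<le> B" unfolding B_def using s by (rule SUP_upper)
        have h3: "epowr (ennreal (num s) / ennreal (Wt s)) \<theta> \<le> ennreal b"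
          using order_trans[OF epowr_mono[OF h1, of \<theta>] h2] th0 Beq by simp
        show ?thesis
        proof (cases "Wt s = 0")
          case True
          have "num s = 0"
          proof (rule ccontr)
            assume "num s \<noteq> 0"
            then have "ennreal (num s) / ennreal (Wt s) = top" using True num0 by simp
            then have "epowr top \<theta> \<le> ennreal b" using h3 by simp
            then show False by (simp add: epowr_def top_unique)
          qed
          then show ?thesis using True by simp
        next
          case False
          then have Wp: "Wt s > 0" using Wt0 by simp
          have "ennreal (num s) / ennreal (Wt s) = ennreal (num s / Wt s)" using num0 Wp by (rule divide_ennreal)
          then have "ennreal ((num s / Wt s) powr \<theta>) \<le> ennreal b" using h3 num0 Wp by (simp add: epowr_ennreal)
          then have "(num s / Wt s) powr \<theta> \<le> b" using b0 by (simp add: ennreal_le_iff)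
          then have "((num s / Wt s) powr \<theta>) powr (1/\<theta>) \<le> b powr (1/\<theta>)" using th0 by (intro powr_mono2) auto
          then have "num s / Wt s \<le> b powr (1/\<theta>)" using th0 num0 Wp by (simp add: powr_powr powr_one)
          then show ?thesis using Wp by (simp add: pos_divide_le_eq mult.commute)
        qed
      qed
      define S where "S = A0 + b"
      have S0: "S \<ge> 0" unfolding S_def using A0p b0 by simp
      have eps: "Lnorm M r (u t) \<le> S powr (\<gamma>/\<theta>) * Q * (E t + \<epsilon>) powr (\<theta>l * \<gamma> / \<theta>)" if \<epsilon>: "\<epsilon> > 0" for \<epsilon>
      proof -
        define W where "W s = Mf s powr (1/\<theta>) * (E s + \<epsilon>) powr (\<theta>l/\<theta>)" for s
        define v where "v s = Lnorm M r (u s) powr (1/\<gamma>)" for s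
        obtain C where C: "\<forall>\<sigma>\<in>{0..T}. Lnorm M (ereal l) (u \<sigma>) \<le> C \<and> Lnorm M r (u \<sigma>) \<le> C"
          using u_bdd by blast
        define b' where "b' = b powr (1/\<theta>)"
        have b'0: "b' \<ge> 0" unfolding b'_def by simp
        have b'th: "b' powr \<theta> = b" unfolding b'_def using b0 th0 by (simp add: powr_powr powr_one)
        have Wp: "W s \<ge> m0 powr (1/\<theta>) * \<epsilon> powr (\<theta>l/\<theta>)" if s: "s \<in> {0<..t}" for s
        proof -
          have sT: "s \<in> {0<..T}" using s t by auto
          have a: "m0 powr (1/\<theta>) \<le> Mf s powr (1/\<theta>)" using Mf0[OF sT] m0 th0 by (intro powr_mono2) auto
          have b: "\<epsilon> powr (\<theta>l/\<theta>) \<le> (E s + \<epsilon>) powr (\<theta>l/\<theta>)" using E_nn[of s] \<epsilon> th0 thl0 by (intro powr_mono2) auto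
          show ?thesis unfolding W_def using a b by (intro mult_mono) auto
        qed
        have w0: "m0 powr (1/\<theta>) * \<epsilon> powr (\<theta>l/\<theta>) > 0" using m0 \<epsilon> by simp
        have Wpos: "W s > 0" if "s \<in> {0<..t}" for s using Wp[OF that] w0 by linarith
        have vb: "0 \<le> v s \<and> v s \<le> max C 0 powr (1/\<gamma>)" if s: "s \<in> {0<..t}" for s
        proof -
          have "s \<in> {0..T}" using s t by auto
          then have "Lnorm M r (u s) \<le> C" using C by blast
          then have "Lnorm M r (u s) \<le> max C 0" by simp
          then have "v s \<le> max C 0 powr (1/\<gamma>)" unfolding v_def using gam by (intro powr_mono2) (auto simp: Lnn)
          then show ?thesis unfolding v_def by simp
        qed
        have rec: "v s \<le> A0 * W s * (v (s/2) / W (s/2)) powr (1-\<theta>) + b' * W s" if s: "s \<in> {0<..t}" for s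
        proof -
          have sT: "s \<in> {0<..T}" using s t by auto
          have s2T: "s/2 \<in> {0..T}" and s2t: "s/2 \<in> {0<..t}" using s t by auto
          define R where "R = (v (s/2) / W (s/2)) powr (1-\<theta>)"
          have R0: "R \<ge> 0" unfolding R_def by simp
          have h1: "v s \<le> Mf (s/2) * Lnorm M (ereal q) (u (s/2)) + num s"
            using smooth'[OF sT] unfolding v_def num_def by (simp add: algebra_simps)
          have Lr: "Lnorm M r (u (s/2)) = v (s/2) powr \<gamma>"
            unfolding v_def using gam Lnn[of M r "u (s/2)"] by (simp add: powr_powr powr_one)
          have "Lnorm M (ereal q) (u (s/2)) \<le> Lnorm M (ereal l) (u (s/2)) powr \<theta>l * Lnorm M r (u (s/2)) powr (1 - \<theta>l)"
            unfolding \<theta>l_def using u_Lp s2T exps by (intro interp) auto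
          also have "\<dots> \<le> (E (s/2) + \<epsilon>) powr \<theta>l * Lnorm M r (u (s/2)) powr (1 - \<theta>l)"
          proof (rule mult_right_mono)
            have "Lnorm M (ereal l) (u (s/2)) \<le> E (s/2) + \<epsilon>" using u_l[of "s/2"] s2T \<epsilon> by auto
            then show "Lnorm M (ereal l) (u (s/2)) powr \<theta>l \<le> (E (s/2) + \<epsilon>) powr \<theta>l"
              using thl0 by (intro powr_mono2) (auto simp: Lnn)
          qed simp
          also have "Lnorm M r (u (s/2)) powr (1 - \<theta>l) = v (s/2) powr (1 - \<theta>)"
            unfolding Lr using gth by (simp add: powr_powr)
          finally have h2: "Lnorm M (ereal q) (u (s/2)) \<le> (E (s/2) + \<epsilon>) powr \<theta>l * v (s/2) powr (1 - \<theta>)" .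
          have W2: "W (s/2) > 0" using Wpos[OF s2t] .
          have v2: "v (s/2) \<ge> 0" unfolding v_def by simp
          have E2: "E (s/2) + \<epsilon> \<ge> 0" using E_nn[of "s/2"] \<epsilon> by simp
          have Wth: "W (s/2) powr \<theta> = Mf (s/2) * (E (s/2) + \<epsilon>) powr \<theta>l"
            unfolding W_def using th0 Mf_nn[of "s/2"] E2 by (simp add: powr_mult powr_powr powr_one)
          have Wsplit: "W (s/2) = W (s/2) powr \<theta> * W (s/2) powr (1-\<theta>)"
            using W2 by (simp add: powr_add[symmetric])
          have Wa: "W (s/2) powr (1-\<theta>) > 0" using W2 by simp
          have h3: "Mf (s/2) * ((E (s/2) + \<epsilon>) powr \<theta>l * v (s/2) powr (1-\<theta>)) = W (s/2) * R"
          proof -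
            have "W (s/2) * R = W (s/2) * (v (s/2) powr (1-\<theta>) / W (s/2) powr (1-\<theta>))"
              unfolding R_def using v2 W2 by (simp add: powr_divide)
            also have "\<dots> = W (s/2) powr \<theta> * v (s/2) powr (1-\<theta>)"
              using Wa by (subst Wsplit) (simp add: field_simps)
            finally show ?thesis unfolding Wth by (simp add: mult.assoc)
          qed
          have h4: "W (s/2) \<le> A0 * W s"
          proof -
            have "Mf (s/2) powr (1/\<theta>) \<le> (2 powr (\<alpha>/\<gamma>) * Mf s) powr (1/\<theta>)"
              using Mfhalf[OF sT] Mf_nn[of "s/2"] th0 by (intro powr_mono2) auto
            also have "\<dots> = A0 * Mf s powr (1/\<theta>)"
              unfolding A0_def using Mf_nn[of s] by (simp add: powr_mult powr_powr)
            finally have a: "Mf (s/2) powr (1/\<theta>) \<le> A0 * Mf s powr (1/\<theta>)" .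
            have "E (s/2) \<le> E s" using sT by (intro E_mono) auto
            then have b: "(E (s/2) + \<epsilon>) powr (\<theta>l/\<theta>) \<le> (E s + \<epsilon>) powr (\<theta>l/\<theta>)"
              using E2 th0 thl0 by (intro powr_mono2) auto
            have "W (s/2) \<le> (A0 * Mf s powr (1/\<theta>)) * (E s + \<epsilon>) powr (\<theta>l/\<theta>)"
              unfolding W_def using a b A0p by (intro mult_mono) auto
            then show ?thesis unfolding W_def by (simp add: mult.assoc)
          qed
          have h5: "num s \<le> b' * W s"
          proof -
            have "E s powr (\<theta>l/\<theta>) \<le> (E s + \<epsilon>) powr (\<theta>l/\<theta>)" using E_nn[of s] \<epsilon> th0 thl0 by (intro powr_mono2) auto
            then have "Wt s \<le> W s" unfolding Wt_def W_def by (intro mult_left_mono) auto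
            then have "b' * Wt s \<le> b' * W s" using b'0 by (intro mult_left_mono)
            then show ?thesis using numb[OF s] unfolding b'_def by simp
          qed
          have "v s \<le> Mf (s/2) * ((E (s/2) + \<epsilon>) powr \<theta>l * v (s/2) powr (1-\<theta>)) + num s"
            using h1 h2 Mf_nn[of "s/2"] by (smt (verit) mult_left_mono)
          also have "\<dots> = W (s/2) * R + num s" using h3 by simp
          also have "\<dots> \<le> A0 * W s * R + b' * W s"
            using h4 h5 R0 by (intro add_mono mult_right_mono) auto
          finally show ?thesis unfolding R_def .
        qed
        have c: "v t \<le> (A0 + b' powr \<theta>) powr (1/\<theta>) * W t"
          by (rule core[where \<theta>=\<theta> and A=A0 and b=b' and t=t and W=W and wmin="m0 powr (1/\<theta>) * \<epsilon> powr (\<theta>l/\<theta>)" and v=v and V="max C 0 powr (1/\<gamma>)"])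
             (use th0 th1 A0p b'0 t Wp w0 vb rec in auto)
        then have c': "v t \<le> S powr (1/\<theta>) * W t" unfolding S_def b'th .
        have Wt0: "W t \<ge> 0" unfolding W_def by simp
        have Lr: "Lnorm M r (u t) = v t powr \<gamma>"
          unfolding v_def using gam Lnn[of M r "u t"] by (simp add: powr_powr powr_one)
        also have "\<dots> \<le> (S powr (1/\<theta>) * W t) powr \<gamma>" using c' gam by (intro powr_mono2) (auto simp: v_def)
        also have "\<dots> = S powr (\<gamma>/\<theta>) * W t powr \<gamma>" using S0 Wt0 by (simp add: powr_mult powr_powr)
        also have "W t powr \<gamma> = Mf t powr (\<gamma>/\<theta>) * (E t + \<epsilon>) powr (\<theta>l * \<gamma> / \<theta>)"
          unfolding W_def using Mf_nn[of t] E_nn[of t] \<epsilon> by (simp add: powr_mult powr_powr)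
        also have "Mf t powr (\<gamma>/\<theta>) = Q"
        proof -
          have e1: "1/\<gamma> * (\<gamma>/\<theta>) = 1/\<theta>" "\<alpha>/\<gamma> * (\<gamma>/\<theta>) = \<alpha>/\<theta>" using gam by auto
          have "Mf t powr (\<gamma>/\<theta>) = max ((c1 t powr (1/\<gamma>) * (1/t + \<omega>) powr (\<alpha>/\<gamma>)) powr (\<gamma>/\<theta>)) ((c2 t powr (1/\<gamma>)) powr (\<gamma>/\<theta>))"
            unfolding Mf_def using gam th0 by (intro max_powr) auto
          also have "\<dots> = Q" unfolding Q_def using c1p[OF tT] c2n[OF tT] t \<omega> gam
            by (simp add: powr_mult powr_powr e1)
          finally show ?thesis .
        qed
        finally show ?thesis by (simp add: mult.assoc)
      qed
      have lim: "((\<lambda>\<epsilon>. S powr (\<gamma>/\<theta>) * Q * (E t + \<epsilon>) powr (\<theta>l * \<gamma> / \<theta>)) \<longlongrightarrow> S powr (\<gamma>/\<theta>) * Q * (E t + 0) powr (\<theta>l * \<gamma> / \<theta>)) (at_right 0)"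
        using Et by (intro tendsto_intros) auto
      have "Lnorm M r (u t) \<le> S powr (\<gamma>/\<theta>) * Q * (E t + 0) powr (\<theta>l * \<gamma> / \<theta>)"
        by (rule tendsto_le[OF trivial_limit_at_right_real lim tendsto_const])
           (use eventually_at_right_less[of 0] eps in \<open>auto elim: eventually_mono\<close>)
      also have "\<dots> \<le> 2 powr \<gamma> * (S powr (\<gamma>/\<theta>) * Q * E t powr (\<theta>l * \<gamma> / \<theta>))"
      proof -
        have "1 \<le> 2 powr \<gamma>" using gam by (intro ge_one_powr_ge_zero) auto
        moreover have "0 \<le> S powr (\<gamma>/\<theta>) * Q * E t powr (\<theta>l * \<gamma> / \<theta>)" using Qp by simp
        ultimately show ?thesis by (simp add: mult_le_cancel_right1)
      qed
      finally have fin: "Lnorm M r (u t) \<le> 2 powr \<gamma> * (S powr (\<gamma>/\<theta>) * Q * E t powr (\<theta>l * \<gamma> / \<theta>))" .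
      have "epowr (ennreal A0 + B) (\<gamma>/\<theta>) = ennreal (S powr (\<gamma>/\<theta>))"
        unfolding Beq S_def using A0p b0 by (simp add: epowr_ennreal ennreal_plus[symmetric] del: ennreal_plus)
      then have "ennreal (2 powr \<gamma>) * epowr (ennreal A0 + B) (\<gamma>/\<theta>) * ennreal Q * ennreal (E t powr (\<theta>l * \<gamma> / \<theta>))
          = ennreal (2 powr \<gamma> * (S powr (\<gamma>/\<theta>) * Q * E t powr (\<theta>l * \<gamma> / \<theta>)))"
        using Qp by (simp add: ennreal_mult[symmetric] mult.assoc)
      then show ?thesis using fin unfolding A0_def B_def Q_def by (simp add: ennreal_leI)
    qed
  qed
  show ?thesis using key by (simp only: Let_def \<theta>_def \<theta>l_def E_def Mf_def gq_def N_def) blast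
qed

end
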